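(* Let $u,v:\mathbb R\to\mathbb R^2$ be smooth $2\pi$-periodic maps with $[u(t),v(t)]=1$ and $u(t+2\pi/3)=v(t)$, $v(t+2\pi/3)=-u(t)-v(t)$ for all $t$. Let $c:\mathbb R\to\mathbb R^2$ be a $C^1$ curve such that the triangle $w_1(t)=u(t)+c(t)$, $w_2(t)=v(t)+c(t)$, $w_3(t)=-u(t)-v(t)+c(t)$ is horizontal, i.e. $[w_2-w_1,w_3']=[w_3-w_2,w_1']=[w_1-w_3,w_2']=0$ for all $t$. Set $p=[u,u']$, $q=[v,v']$, $r=[u',v]=[v',u]$. Then $$c'(t)=\tfrac13\big(p(t)-2q(t)+2r(t)\big)v(t)-\tfrac13\big(q(t)-2p(t)+2r(t)\big)u(t).$$ Furthermore, the monodromy condition $(w_1,w_2,w_3)(t+2\pi/3)=(w_2,w_3,w_1)(t)$ for all $t$ holds if and only if $$\int_0^{2\pi}\big(p-2q+2r\big)v-\big(q-2p+2r\big)u\,dt=0,$$ or, equivalently, if and only if $\int_0^{2\pi}[u'(t),v(t)]\,(v(t)-u(t))\,dt=0$.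
   Context: $[\cdot,\cdot]$ is the determinant of two plane vectors; primes denote derivatives in $t$. The triangle $(w_1,w_2,w_3)$ has centroid $c$ and oriented area $3/2$. *)

theory Defs
  imports "HOL-Analysis.Analysis"
begin

definition det2 :: "real^2 \<Rightarrow> real^2 \<Rightarrow> real" where
  "det2 a b = a$1 * b$2 - a$2 * b$1"

definition smooth_curve :: "(real \<Rightarrow> real^2) \<Rightarrow> bool" where
  "smooth_curve f \<longleftrightarrow> (\<exists>D :: nat \<Rightarrow> real \<Rightarrow> real^2. D 0 = f \<and>
      (\<forall>k t. (D k has_vector_derivative D (Suc k) t) (at t)))"

end

theory Submission imports Defs begin

definition Gf :: "real^2 \<Rightarrow> real^2 \<Rightarrow> real^2 \<Rightarrow> real^2 \<Rightarrow> real^2" where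
  "Gf u v a b = (det2 u a - 2 * det2 v b + 2 * det2 a v) *\<^sub>R v
                - (det2 v b - 2 * det2 u a + 2 * det2 a v) *\<^sub>R u"

definition Hf :: "real^2 \<Rightarrow> real^2 \<Rightarrow> real^2 \<Rightarrow> real^2 \<Rightarrow> real^2" where
  "Hf u v a b = (det2 u a - 2 * det2 v b - det2 a v) *\<^sub>R v
                - (det2 v b - 2 * det2 u a - det2 a v) *\<^sub>R u"

definition Kf :: "real^2 \<Rightarrow> real^2 \<Rightarrow> real^2 \<Rightarrow> real^2 \<Rightarrow> real^2" where
  "Kf u v a b = (- 2 * det2 u a + det2 a v) *\<^sub>R u + (- det2 u a + 2 * det2 a v) *\<^sub>R v"

lemma P1_alg:
  fixes u v a b x cc :: "real^2"
  assumes "det2 u v = 1" "det2 a v + det2 u b = 0"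
    "det2 ((- u - v + cc) - (v + cc)) (a + x) = 0"
    "det2 ((u + cc) - (- u - v + cc)) (b + x) = 0"
  shows "x = (1/3) *\<^sub>R Gf u v a b"
proof -
  have "x $ 1 = ((1/3) *\<^sub>R Gf u v a b) $ 1" "x $ 2 = ((1/3) *\<^sub>R Gf u v a b) $ 2"
    using assms unfolding Gf_def det2_def apply simp_all
    apply algebra
    apply algebra
    done
  then show ?thesis by (simp add: vec_eq_iff forall_2)
qed

lemma per_alg:
  fixes u v a b :: "real^2"
  assumes "det2 a v + det2 u b = 0"
  shows "Gf v (- u - v) b (- a - b) = Gf u v a b"
proof -
  have "(Gf v (- u - v) b (- a - b)) $ 1 = (Gf u v a b) $ 1" "(Gf v (- u - v) b (- a - b)) $ 2 = (Gf u v a b) $ 2"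
    using assms unfolding Gf_def det2_def apply simp_all
    apply algebra
    apply algebra
    done
  then show ?thesis by (simp add: vec_eq_iff forall_2)
qed

lemma K_alg:
  fixes u v a b :: "real^2"
  assumes "det2 a v + det2 u b = 0"
  shows "Kf v (- u - v) b (- a - b) - Kf u v a b = Hf u v a b"
proof -
  have "(Kf v (- u - v) b (- a - b) - Kf u v a b) $ 1 = (Hf u v a b) $ 1"
       "(Kf v (- u - v) b (- a - b) - Kf u v a b) $ 2 = (Hf u v a b) $ 2"
    using assms unfolding Kf_def Hf_def det2_def apply simp_all
    apply algebra
    apply algebra
    done
  then show ?thesis by (simp add: vec_eq_iff forall_2)
qed

lemma GH_alg:
  fixes u v a b :: "real^2"
  shows "Gf u v a b = 3 *\<^sub>R (det2 a v *\<^sub>R (v - u)) + Hf u v a b"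
proof -
  have "(Gf u v a b) $ 1 = (3 *\<^sub>R (det2 a v *\<^sub>R (v - u)) + Hf u v a b) $ 1"
       "(Gf u v a b) $ 2 = (3 *\<^sub>R (det2 a v *\<^sub>R (v - u)) + Hf u v a b) $ 2"
    unfolding Gf_def Hf_def det2_def by (simp_all add: algebra_simps)
  then show ?thesis by (simp add: vec_eq_iff forall_2)
qed

lemma shift_deriv:
  fixes f g :: "real \<Rightarrow> real^2"
  assumes "\<And>t. (f has_vector_derivative f' t) (at t)"
    "\<And>t. (g has_vector_derivative g' t) (at t)" "\<And>t. f (t + s) = g t"
  shows "f' (t + s) = g' t"
proof -
  have "((f \<circ> (\<lambda>x. x + s)) has_vector_derivative 1 *\<^sub>R f' (t + s)) (at t)"
    by (rule vector_diff_chain_at) (auto intro!: derivative_eq_intros assms(1))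
  moreover have "f \<circ> (\<lambda>x. x + s) = g" using assms(3) by (auto simp: o_def)
  ultimately have "(g has_vector_derivative 1 *\<^sub>R f' (t + s)) (at t)" by simp
  from vector_derivative_unique_at[OF this assms(2)] show ?thesis by simp
qed

lemma periodic_int:
  fixes f :: "real \<Rightarrow> real^2"
  assumes cf: "continuous_on UNIV f" and pf: "\<And>t. f (t + P) = f t" and "0 \<le> s" "s \<le> P"
  shows "integral {0..P} (\<lambda>t. f (t + s)) = integral {0..P} f"
proof -
  have i: "\<And>a b. f integrable_on {a..b}"
    by (rule integrable_continuous_interval) (rule continuous_on_subset[OF cf], auto)
  have 1: "integral {0..P} (\<lambda>t. f (t + s)) = integral {s..P+s} f"
    using integral_shift_real_ivl[of s s "P+s" f] by simp
  have 2: "integral {s..P} f + integral {P..P+s} f = integral {s..P+s} f"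
    by (rule Henstock_Kurzweil_Integration.integral_combine) (use assms i in auto)
  have 3: "integral {P..P+s} f = integral {0..s} f"
  proof -
    have "integral {P-P..P+s-P} (\<lambda>x. f (x+P)) = integral {P..P+s} f"
      by (rule integral_shift_real_ivl)
    then show ?thesis using pf by simp
  qed
  have 4: "integral {0..s} f + integral {s..P} f = integral {0..P} f"
    by (rule Henstock_Kurzweil_Integration.integral_combine) (use assms i in auto)
  show ?thesis using 1 2 3 4 by (simp add: add.commute)
qed

theorem proposition4p3:
  fixes u v c :: "real \<Rightarrow> real^2"
  defines "w1 \<equiv> (\<lambda>t. u t + c t)"
      and "w2 \<equiv> (\<lambda>t. v t + c t)"
      and "w3 \<equiv> (\<lambda>t. - u t - v t + c t)"
      and "p \<equiv> (\<lambda>t. det2 (u t) (vector_derivative u (at t)))"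
      and "q \<equiv> (\<lambda>t. det2 (v t) (vector_derivative v (at t)))"
      and "r \<equiv> (\<lambda>t. det2 (vector_derivative u (at t)) (v t))"
  assumes su: "smooth_curve u" and sv: "smooth_curve v"
      and pu: "\<And>t. u (t + 2*pi) = u t" and pv: "\<And>t. v (t + 2*pi) = v t"
      and dt: "\<And>t. det2 (u t) (v t) = 1"
      and su3: "\<And>t. u (t + 2*pi/3) = v t"
      and sv3: "\<And>t. v (t + 2*pi/3) = - u t - v t"
      and c1: "c C1_differentiable_on UNIV"
      and h1: "\<And>t. det2 (w2 t - w1 t) (vector_derivative w3 (at t)) = 0"
      and h2: "\<And>t. det2 (w3 t - w2 t) (vector_derivative w1 (at t)) = 0"
      and h3: "\<And>t. det2 (w1 t - w3 t) (vector_derivative w2 (at t)) = 0"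
  shows "(\<forall>t. vector_derivative c (at t) =
            ((1/3) * (p t - 2 * q t + 2 * r t)) *\<^sub>R v t
          - ((1/3) * (q t - 2 * p t + 2 * r t)) *\<^sub>R u t)
       \<and> ((\<forall>t. w1 (t + 2*pi/3) = w2 t \<and> w2 (t + 2*pi/3) = w3 t \<and> w3 (t + 2*pi/3) = w1 t)
            \<longleftrightarrow> integral {0..2*pi} (\<lambda>t. (p t - 2 * q t + 2 * r t) *\<^sub>R v t
                                        - (q t - 2 * p t + 2 * r t) *\<^sub>R u t) = 0)
       \<and> ((\<forall>t. w1 (t + 2*pi/3) = w2 t \<and> w2 (t + 2*pi/3) = w3 t \<and> w3 (t + 2*pi/3) = w1 t)
            \<longleftrightarrow> integral {0..2*pi} (\<lambda>t. det2 (vector_derivative u (at t)) (v t) *\<^sub>R (v t - u t)) = 0)"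
proof -
  obtain Du where Du0: "Du 0 = u" and Du: "\<And>k t. (Du k has_vector_derivative Du (Suc k) t) (at t)"
    using su unfolding smooth_curve_def by blast
  obtain Dv where Dv0: "Dv 0 = v" and Dv: "\<And>k t. (Dv k has_vector_derivative Dv (Suc k) t) (at t)"
    using sv unfolding smooth_curve_def by blast
  define U1 where "U1 = Du 1"
  define V1 where "V1 = Dv 1"
  have du: "\<And>t. (u has_vector_derivative U1 t) (at t)" using Du[of 0] Du0 U1_def by simp
  have dv: "\<And>t. (v has_vector_derivative V1 t) (at t)" using Dv[of 0] Dv0 V1_def by simp
  have cU1: "continuous_on UNIV U1"
    by (rule continuous_at_imp_continuous_on) (use has_vector_derivative_continuous[OF Du[of 1]] U1_def in auto)
  have cV1: "continuous_on UNIV V1"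
    by (rule continuous_at_imp_continuous_on) (use has_vector_derivative_continuous[OF Dv[of 1]] V1_def in auto)
  have cu: "continuous_on UNIV u"
    by (rule continuous_at_imp_continuous_on) (use has_vector_derivative_continuous[OF du] in auto)
  have cv: "continuous_on UNIV v"
    by (rule continuous_at_imp_continuous_on) (use has_vector_derivative_continuous[OF dv] in auto)
  have vdu: "\<And>t. vector_derivative u (at t) = U1 t" using du vector_derivative_at by blast
  have vdv: "\<And>t. vector_derivative v (at t) = V1 t" using dv vector_derivative_at by blast
  define C' where "C' t = vector_derivative c (at t)" for t
  have dc: "\<And>t. (c has_vector_derivative C' t) (at t)"
    using c1 unfolding C1_differentiable_on_eq C'_def by (auto simp: vector_derivative_works[symmetric])
  have cC': "continuous_on UNIV C'"
    using c1 unfolding C1_differentiable_on_eq C'_def by auto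
  have dw1: "\<And>t. vector_derivative w1 (at t) = U1 t + C' t"
    unfolding w1_def by (intro vector_derivative_at has_vector_derivative_add du dc)
  have dw2: "\<And>t. vector_derivative w2 (at t) = V1 t + C' t"
    unfolding w2_def by (intro vector_derivative_at has_vector_derivative_add dv dc)
  have detd: "det2 (U1 t) (v t) + det2 (u t) (V1 t) = 0" for t
  proof -
    have cu': "((\<lambda>t. u t $ i) has_real_derivative U1 t $ i) (at t)" for i
      using bounded_linear.has_vector_derivative[OF bounded_linear_vec_nth du]
      by (simp add: has_real_derivative_iff_has_vector_derivative)
    have cv': "((\<lambda>t. v t $ i) has_real_derivative V1 t $ i) (at t)" for i
      using bounded_linear.has_vector_derivative[OF bounded_linear_vec_nth dv]
      by (simp add: has_real_derivative_iff_has_vector_derivative)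
    have "((\<lambda>t. det2 (u t) (v t)) has_real_derivative det2 (U1 t) (v t) + det2 (u t) (V1 t)) (at t)"
      unfolding det2_def
      by (auto intro!: derivative_eq_intros cu' cv' simp: algebra_simps)
    moreover have "(\<lambda>t. det2 (u t) (v t)) = (\<lambda>t. 1)" using dt by auto
    ultimately show ?thesis using DERIV_unique DERIV_const by metis
  qed
  have shU: "U1 (t + 2*pi/3) = V1 t" for t by (rule shift_deriv[OF du dv su3])
  have shV: "V1 (t + 2*pi/3) = - U1 t - V1 t" for t
    by (rule shift_deriv[OF dv _ sv3]) (auto intro!: derivative_eq_intros du dv)
  have pU: "U1 (t + 2*pi) = U1 t" for t by (rule shift_deriv[OF du du pu])
  have pV: "V1 (t + 2*pi) = V1 t" for t by (rule shift_deriv[OF dv dv pv])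
  define G where "G t = Gf (u t) (v t) (U1 t) (V1 t)" for t
  have P1: "C' t = (1/3) *\<^sub>R G t" for t
  proof -
    have a: "det2 ((- u t - v t + c t) - (v t + c t)) (U1 t + C' t) = 0"
      using h2[of t] unfolding dw1 w3_def w2_def by simp
    have b: "det2 ((u t + c t) - (- u t - v t + c t)) (V1 t + C' t) = 0"
      using h3[of t] unfolding dw2 w3_def w1_def by simp
    show ?thesis unfolding G_def by (rule P1_alg[OF dt detd a b])
  qed
  have Gint: "(\<lambda>t. (p t - 2 * q t + 2 * r t) *\<^sub>R v t - (q t - 2 * p t + 2 * r t) *\<^sub>R u t) = G"
    unfolding p_def q_def r_def vdu vdv G_def Gf_def by simp
  have part1: "\<forall>t. vector_derivative c (at t) =
            ((1/3) * (p t - 2 * q t + 2 * r t)) *\<^sub>R v t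
          - ((1/3) * (q t - 2 * p t + 2 * r t)) *\<^sub>R u t"
  proof
    fix t
    have "vector_derivative c (at t) = (1/3) *\<^sub>R G t" using P1 C'_def by simp
    also have "\<dots> = ((1/3) * (p t - 2 * q t + 2 * r t)) *\<^sub>R v t
          - ((1/3) * (q t - 2 * p t + 2 * r t)) *\<^sub>R u t"
      using fun_cong[OF Gint, of t, symmetric] by (simp add: scaleR_right_diff_distrib)
    finally show "vector_derivative c (at t) = ((1/3) * (p t - 2 * q t + 2 * r t)) *\<^sub>R v t
          - ((1/3) * (q t - 2 * p t + 2 * r t)) *\<^sub>R u t" .
  qed
  define d where "d t = c (t + 2*pi/3) - c t" for t
  have Gper: "G (t + 2*pi/3) = G t" for t
    unfolding G_def su3 sv3 shU shV by (rule per_alg[OF detd])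
  have dd: "(d has_vector_derivative 0) (at t)" for t
  proof -
    have "((c \<circ> (\<lambda>x. x + 2*pi/3)) has_vector_derivative 1 *\<^sub>R C' (t + 2*pi/3)) (at t)"
      by (rule vector_diff_chain_at) (auto intro!: derivative_eq_intros dc)
    then have "(d has_vector_derivative (C' (t + 2*pi/3) - C' t)) (at t)"
      unfolding d_def by (auto intro!: derivative_eq_intros dc simp: o_def)
    moreover have "C' (t + 2*pi/3) - C' t = 0" using P1 Gper by simp
    ultimately show ?thesis by simp
  qed
  obtain k where dk: "\<And>t. d t = k"
    using has_vector_derivative_zero_constant[of UNIV d] dd by auto
  have ftc: "(C' has_integral (c (2*pi) - c 0)) {0..2*pi}"
    by (rule fundamental_theorem_of_calculus) (auto intro: has_vector_derivative_at_within dc)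
  have e: "0 + 2*pi/3 = 2*pi/3" "2*pi/3 + 2*pi/3 = 4*pi/3" "4*pi/3 + 2*pi/3 = 2*pi" by simp_all
  have "c (2*pi) - c 0 = d 0 + d (2*pi/3) + d (4*pi/3)" unfolding d_def e by simp
  then have c3: "c (2*pi) - c 0 = 3 *\<^sub>R k" using dk by (simp add: vec_eq_iff)
  have "((\<lambda>t. 3 *\<^sub>R C' t) has_integral 3 *\<^sub>R (c (2*pi) - c 0)) {0..2*pi}"
    by (rule has_integral_cmul[OF ftc])
  moreover have "(\<lambda>t. 3 *\<^sub>R C' t) = G" using P1 by auto
  ultimately have "(G has_integral 3 *\<^sub>R (3 *\<^sub>R k)) {0..2*pi}" unfolding c3 by simp
  then have IG: "integral {0..2*pi} G = 9 *\<^sub>R k" by (simp add: integral_unique)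
  have mono: "(\<forall>t. w1 (t + 2*pi/3) = w2 t \<and> w2 (t + 2*pi/3) = w3 t \<and> w3 (t + 2*pi/3) = w1 t)
     \<longleftrightarrow> k = 0"
  proof
    assume "\<forall>t. w1 (t + 2*pi/3) = w2 t \<and> w2 (t + 2*pi/3) = w3 t \<and> w3 (t + 2*pi/3) = w1 t"
    then have "w1 (0 + 2*pi/3) = w2 0" by blast
    then have "d 0 = 0" unfolding w1_def w2_def d_def su3 by simp
    then show "k = 0" using dk by simp
  next
    assume "k = 0"
    then have "c (t + 2*pi/3) = c t" for t using dk[of t] d_def by simp
    then show "\<forall>t. w1 (t + 2*pi/3) = w2 t \<and> w2 (t + 2*pi/3) = w3 t \<and> w3 (t + 2*pi/3) = w1 t"
      unfolding w1_def w2_def w3_def su3 sv3 by (simp add: algebra_simps)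
  qed
  have part2: "(\<forall>t. w1 (t + 2*pi/3) = w2 t \<and> w2 (t + 2*pi/3) = w3 t \<and> w3 (t + 2*pi/3) = w1 t)
            \<longleftrightarrow> integral {0..2*pi} (\<lambda>t. (p t - 2 * q t + 2 * r t) *\<^sub>R v t
                                        - (q t - 2 * p t + 2 * r t) *\<^sub>R u t) = 0"
    unfolding Gint IG mono by simp
  define R where "R t = det2 (U1 t) (v t) *\<^sub>R (v t - u t)" for t
  define K where "K t = Kf (u t) (v t) (U1 t) (V1 t)" for t
  have cR: "continuous_on UNIV R"
    unfolding R_def det2_def by (intro continuous_intros cu cv cU1 cV1)
  have cK: "continuous_on UNIV K"
    unfolding K_def Kf_def det2_def by (intro continuous_intros cu cv cU1 cV1)
  have cKs: "continuous_on UNIV (\<lambda>t. K (t + 2*pi/3))"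
    by (rule continuous_on_compose2[OF cK]) (auto intro!: continuous_intros)
  have iR: "R integrable_on {0..2*pi}"
    by (rule integrable_continuous_interval) (rule continuous_on_subset[OF cR], auto)
  have iK: "K integrable_on {0..2*pi}"
    by (rule integrable_continuous_interval) (rule continuous_on_subset[OF cK], auto)
  have iKs: "(\<lambda>t. K (t + 2*pi/3)) integrable_on {0..2*pi}"
    by (rule integrable_continuous_interval) (rule continuous_on_subset[OF cKs], auto)
  have GRK: "G t = 3 *\<^sub>R R t + (K (t + 2*pi/3) - K t)" for t
    unfolding G_def R_def K_def su3 sv3 shU shV K_alg[OF detd] by (rule GH_alg)
  have Kper: "K (t + 2*pi) = K t" for t unfolding K_def pu pv pU pV ..
  have "integral {0..2*pi} G = 3 *\<^sub>R integral {0..2*pi} R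
        + (integral {0..2*pi} (\<lambda>t. K (t + 2*pi/3)) - integral {0..2*pi} K)"
    unfolding GRK
    by (simp add: integral_add integral_diff iR iK iKs integrable_cmul integrable_diff)
  also have "integral {0..2*pi} (\<lambda>t. K (t + 2*pi/3)) = integral {0..2*pi} K"
    by (rule periodic_int[OF cK Kper]) auto
  finally have IGR: "integral {0..2*pi} G = 3 *\<^sub>R integral {0..2*pi} R" by simp
  have Rint: "(\<lambda>t. det2 (vector_derivative u (at t)) (v t) *\<^sub>R (v t - u t)) = R"
    unfolding R_def vdu ..
  have part3: "(\<forall>t. w1 (t + 2*pi/3) = w2 t \<and> w2 (t + 2*pi/3) = w3 t \<and> w3 (t + 2*pi/3) = w1 t)
            \<longleftrightarrow> integral {0..2*pi} (\<lambda>t. det2 (vector_derivative u (at t)) (v t) *\<^sub>R (v t - u t)) = 0"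
    unfolding Rint part2 Gint IGR by simp
  show ?thesis using part1 part2 part3 by blast
qed

end
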